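(* Let $N,M$ be integers with $0<M<N/2$. The maximal elements of the poset $\mathbf{Str}(N,M)$ are exactly the strings of dimension $N-2M$.
   Context: A circular symbol string of length $N$ is $s=s_1\cdots s_N$ with each $s_i\in\{0,1,X\}$, indices read cyclically modulo $N$; $0,1$ are called bits. A block of $s$ is a maximal cyclic run of consecutive equal symbols. $s$ is a circular cellular string of rank $M$ if it has exactly $M$ blocks of symbol $0$, exactly $M$ blocks of symbol $1$, and every block of symbol $X$ is cyclically preceded and followed by blocks of different bits (one of symbol $0$ and one of symbol $1$). Its dimension is its number of symbols $X$. $\mathbf{Str}(N,M)$ is the set of such strings, partially ordered by $s'<s$ iff $s$ is obtained from $s'$ by replacing some (at least one) of the bits of $s'$ by $X$. *)

theory Defs
  imports Main
begin

datatype sym = B0 | B1 | SX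

text \<open>A circular string of length N is a list of length N; indices are read modulo N.\<close>
definition cyc :: "sym list \<Rightarrow> nat \<Rightarrow> sym" where
  "cyc s i = s ! (i mod length s)"

text \<open>If the whole (nonempty)
  string is c, there is exactly one block; otherwise blocks correspond to their
  starting positions i (s_i = c, s_{i-1} \<noteq> c).\<close>
definition num_blocks :: "sym \<Rightarrow> sym list \<Rightarrow> nat" where
  "num_blocks c s =
     (if s \<noteq> [] \<and> (\<forall>i<length s. s ! i = c) then 1
      else card {i. i < length s \<and> cyc s i = c \<and> cyc s (i + length s - 1) \<noteq> c})"

text \<open>Every block of X is cyclically preceded and followed by blocks of different
  bits. An X-block starting at position i of length L is preceded by position i-1 and
  followed by position i+L; when the string is not entirely X these are bits.
  A string consisting only of X has a single X-block with no bit neighbours.\<close>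
definition X_blocks_ok :: "sym list \<Rightarrow> bool" where
  "X_blocks_ok s \<longleftrightarrow>
     ((\<forall>i<length s. s ! i = SX) \<longrightarrow> s = []) \<and>
     (\<forall>i L. i < length s \<and> 0 < L \<and> cyc s (i + length s - 1) \<noteq> SX \<and>
            (\<forall>j<L. cyc s (i + j) = SX) \<and> cyc s (i + L) \<noteq> SX
        \<longrightarrow> cyc s (i + length s - 1) \<noteq> cyc s (i + L))"

definition cellular :: "nat \<Rightarrow> nat \<Rightarrow> sym list \<Rightarrow> bool" where
  "cellular N M s \<longleftrightarrow> length s = N \<and> num_blocks B0 s = M \<and> num_blocks B1 s = M
     \<and> X_blocks_ok s"

definition Str :: "nat \<Rightarrow> nat \<Rightarrow> sym list set" where
  "Str N M = {s. cellular N M s}"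

definition dimension :: "sym list \<Rightarrow> nat" where
  "dimension s = card {i. i < length s \<and> s ! i = SX}"

definition str_less :: "sym list \<Rightarrow> sym list \<Rightarrow> bool" where
  "str_less s' s \<longleftrightarrow> length s' = length s \<and> s' \<noteq> s \<and>
     (\<forall>i<length s. s' ! i = s ! i \<or> (s' ! i \<noteq> SX \<and> s ! i = SX))"

definition maximal_in :: "sym list set \<Rightarrow> sym list \<Rightarrow> bool" where
  "maximal_in P s \<longleftrightarrow> s \<in> P \<and> \<not> (\<exists>t\<in>P. str_less s t)"

end

theory Submission
  imports Defs
begin

lemma cyc_lt: "i < length s \<Longrightarrow> cyc s i = s ! i"
  by (simp add: cyc_def)

lemma cyc_add_len: "cyc s (i + length s) = cyc s i"
  by (simp add: cyc_def)

lemma cyc_mod_add: "cyc s (a mod length s + b) = cyc s (a + b)"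
  by (simp add: cyc_def mod_add_left_eq)

lemma cyc_mod: "cyc s (a mod length s) = cyc s a"
  using cyc_mod_add[of s a 0] by simp

lemma mod_ne:
  fixes j m N :: nat
  assumes "j < N" "0 < m" "m < N"
  shows "(j + m) mod N \<noteq> j"
proof (cases "j + m < N")
  case True then show ?thesis using assms by simp
next
  case False
  then have "(j + m) mod N = j + m - N"
    using assms by (simp add: mod_if)
  then show ?thesis using assms False by simp
qed

lemma nb_card:
  "\<not> (\<forall>i<length s. s ! i = d) \<Longrightarrow>
   num_blocks d s = card {i. i < length s \<and> cyc s i = d \<and> cyc s (i + length s - 1) \<noteq> d}"
  by (auto simp: num_blocks_def)

lemma not_all_bit:
  assumes "cellular N M s" "0 < M" "d \<noteq> SX"
  shows "\<not> (\<forall>i<N. s ! i = d)"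
proof
  assume A: "\<forall>i<N. s ! i = d"
  obtain d' where d': "d' \<noteq> d" "d' \<noteq> SX" using assms(3) by (cases d) auto
  have L: "length s = N" using assms(1) by (simp add: cellular_def)
  have "\<not> (\<forall>i<length s. s ! i = d')"
  proof
    assume B: "\<forall>i<length s. s ! i = d'"
    have "num_blocks d' s = M" using assms(1) d' by (cases d'; cases d) (auto simp: cellular_def)
    then have "s \<noteq> []" using assms(2) by (auto simp: num_blocks_def)
    then show False using A B L d' by auto
  qed
  then have "num_blocks d' s = card {i. i < length s \<and> cyc s i = d' \<and> cyc s (i + length s - 1) \<noteq> d'}"
    by (rule nb_card)
  also have "{i. i < length s \<and> cyc s i = d' \<and> cyc s (i + length s - 1) \<noteq> d'} = {}"
    using A L d' by (auto simp: cyc_lt)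
  finally have "num_blocks d' s = 0" by simp
  moreover have "num_blocks d' s = M" using assms(1) d' by (cases d'; cases d) (auto simp: cellular_def)
  ultimately show False using assms(2) by simp
qed

lemma nb_M:
  assumes "cellular N M s" "d \<noteq> SX"
  shows "num_blocks d s = M"
  using assms by (cases d) (auto simp: cellular_def)

lemma bits_ge:
  assumes "cellular N M s" "0 < M" "d \<noteq> SX"
  shows "M \<le> card {i. i < N \<and> s ! i = d}"
proof -
  have L: "length s = N" using assms(1) by (simp add: cellular_def)
  have "M = card {i. i < length s \<and> cyc s i = d \<and> cyc s (i + length s - 1) \<noteq> d}"
    using nb_card[of s d] not_all_bit[OF assms] nb_M[OF assms(1,3)] L by simp
  also have "\<dots> \<le> card {i. i < N \<and> s ! i = d}"
    by (rule card_mono) (auto simp: L cyc_lt)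
  finally show ?thesis .
qed

lemma dim_sum:
  assumes "length s = N"
  shows "dimension s + card {i. i < N \<and> s ! i = B0} + card {i. i < N \<and> s ! i = B1} = N"
proof -
  have U: "{..<N} = {i. i < N \<and> s ! i = SX} \<union> ({i. i < N \<and> s ! i = B0} \<union> {i. i < N \<and> s ! i = B1})"
    by (auto intro: sym.exhaust)
  have "card {..<N} = card {i. i < N \<and> s ! i = SX} + (card {i. i < N \<and> s ! i = B0} + card {i. i < N \<and> s ! i = B1})"
  proof -
    have 1: "card ({i. i < N \<and> s ! i = B0} \<union> {i. i < N \<and> s ! i = B1}) = card {i. i < N \<and> s ! i = B0} + card {i. i < N \<and> s ! i = B1}"
      by (rule card_Un_disjoint) auto
    have 2: "card ({i. i < N \<and> s ! i = SX} \<union> ({i. i < N \<and> s ! i = B0} \<union> {i. i < N \<and> s ! i = B1})) = card {i. i < N \<and> s ! i = SX} + card ({i. i < N \<and> s ! i = B0} \<union> {i. i < N \<and> s ! i = B1})"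
      by (rule card_Un_disjoint) auto
    show ?thesis unfolding U using 1 2 by simp
  qed
  then show ?thesis using assms by (simp add: dimension_def)
qed

lemma dim_le:
  assumes "cellular N M s" "0 < M"
  shows "dimension s + 2 * M \<le> N"
  using dim_sum[of s N] bits_ge[OF assms, of B0] bits_ge[OF assms, of B1] assms(1)
  by (simp add: cellular_def)

lemma exists_end:
  assumes c: "cellular N M s" and M: "0 < M" and d: "d \<noteq> SX"
    and gt: "M < card {i. i < N \<and> s ! i = d}"
  shows "\<exists>j<N. s ! j = d \<and> cyc s (j + N - 1) = d \<and> cyc s (j + 1) \<noteq> d"
proof (rule ccontr)
  assume H0: "\<not> ?thesis"
  have L: "length s = N" using c by (simp add: cellular_def)
  have N0: "0 < N" using gt by (cases "N = 0") auto
  have "M = card {i. i < length s \<and> cyc s i = d \<and> cyc s (i + length s - 1) \<noteq> d}"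
    using nb_card[of s d] not_all_bit[OF c M d] nb_M[OF c d] L by simp
  then have "\<not> {i. i < N \<and> s ! i = d} \<subseteq> {i. i < length s \<and> cyc s i = d \<and> cyc s (i + length s - 1) \<noteq> d}"
    using gt card_mono[of "{i. i < length s \<and> cyc s i = d \<and> cyc s (i + length s - 1) \<noteq> d}" "{i. i < N \<and> s ! i = d}"] L
    by auto
  then obtain j0 where j0: "j0 < N" "s ! j0 = d" "cyc s (j0 + N - 1) = d"
    using L by (auto simp: cyc_lt)
  have H: "cyc s (j + 1) = d" if "cyc s j = d" "cyc s (j + N - 1) = d" for j
  proof -
    have a: "j mod N < N" using N0 by simp
    have "s ! (j mod N) = d" using that(1) cyc_mod[of s j] L a by (simp add: cyc_lt)
    moreover have "cyc s (j mod N + N - 1) = d"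
      using that(2) cyc_mod_add[of s j "N - 1"] L N0 by simp
    ultimately have "cyc s (j mod N + 1) = d" using H0 a by blast
    then show ?thesis using cyc_mod_add[of s j 1] L by simp
  qed
  have I: "cyc s (j0 + k) = d \<and> cyc s (j0 + k + N - 1) = d" for k
  proof (induction k)
    case 0 then show ?case using j0 by (simp add: cyc_lt L)
  next
    case (Suc k)
    have "cyc s (j0 + k + 1) = d" using H Suc by simp
    moreover have "cyc s (j0 + Suc k + N - 1) = d"
      using Suc cyc_add_len[of s "j0 + k"] L N0 by simp
    ultimately show ?case by simp
  qed
  have "\<forall>i<N. s ! i = d"
  proof (intro allI impI)
    fix p assume p: "p < N"
    have "j0 + (p + N - j0) = p + N" using j0 by simp
    then have "cyc s (j0 + (p + N - j0)) = cyc s p" using cyc_add_len[of s p] L by simp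
    then show "s ! p = d" using I[of "p + N - j0"] p L by (simp add: cyc_lt)
  qed
  then show False using not_all_bit[OF c M d] by simp
qed


lemma replace_ok:
  assumes c: "cellular N M s" and M: "0 < M" and NM: "2 * M < N" and j: "j < N"
    and d: "d \<noteq> SX" and sj: "s ! j = d" and prev: "cyc s (j + N - 1) = d"
    and next1: "cyc s (j + 1) \<noteq> d"
  shows "cellular N M (s[j := SX])"
proof -
  define t where "t = s[j := SX]"
  have L: "length s = N" using c by (simp add: cellular_def)
  have Lt: "length t = N" using L by (simp add: t_def)
  have N2: "2 \<le> N" using NM M by simp
  have ct: "cyc t i = (if i mod N = j then SX else cyc s i)" for i
    using L N2 j by (simp add: t_def cyc_def)
  have ne1: "(j + 1) mod N \<noteq> j" using mod_ne[of j N 1] j N2 by simp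
  have ne2: "(j + N - 1) mod N \<noteq> j" using mod_ne[of j N "N - 1"] j N2 by simp
  have ctprev: "cyc t (j + N - 1) = d" using ct ne2 prev by simp
  have ctj: "t ! j = SX" using j L by (simp add: t_def)
  have sjc: "cyc s j = d" using sj j L by (simp add: cyc_lt)
  have nb: "num_blocks e t = num_blocks e s" if e: "e \<noteq> SX" for e
  proof -
    have nt: "\<not> (\<forall>i<length t. t ! i = e)" using ctj j Lt e by auto
    have ns: "\<not> (\<forall>i<length s. s ! i = e)" using not_all_bit[OF c M e] L by simp
    have "{i. i < length t \<and> cyc t i = e \<and> cyc t (i + length t - 1) \<noteq> e}
        = {i. i < length s \<and> cyc s i = e \<and> cyc s (i + length s - 1) \<noteq> e}"
    proof (rule Collect_cong)
      fix i
      show "(i < length t \<and> cyc t i = e \<and> cyc t (i + length t - 1) \<noteq> e) =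
            (i < length s \<and> cyc s i = e \<and> cyc s (i + length s - 1) \<noteq> e)"
      proof (cases "i < N")
        case False then show ?thesis using L Lt by simp
      next
        case iN: True
        show ?thesis
        proof (cases "i = j")
          case True then show ?thesis using ct e sjc prev j L Lt by auto
        next
          case ij: False
          have cti: "cyc t i = cyc s i" using ct iN ij by simp
          show ?thesis
          proof (cases "(i + N - 1) mod N = j")
            case True
            have "cyc s (j + 1) = cyc s (i + N - 1 + 1)"
              using cyc_mod_add[of s "i + N - 1" 1] True L by simp
            also have "\<dots> = cyc s i" using cyc_add_len[of s i] L N2 by simp
            finally have "cyc s i \<noteq> d" using next1 by simp
            moreover have "cyc s (i + N - 1) = d"
              using cyc_mod[of s "i + N - 1"] True L sjc by simp
            ultimately show ?thesis using ct True cti e L Lt by auto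
          next
            case False
            then show ?thesis using ct cti L Lt by auto
          qed
        qed
      qed
    qed
    then show ?thesis using nb_card[OF nt] nb_card[OF ns] by simp
  qed
  have xo: "X_blocks_ok s" using c by (simp add: cellular_def)
  have "X_blocks_ok t"
    unfolding X_blocks_ok_def
  proof (intro conjI allI impI)
    assume "\<forall>i<length t. t ! i = SX"
    then have "t ! ((j + N - 1) mod N) = SX" using Lt N2 by simp
    then have "cyc t (j + N - 1) = SX" using Lt by (simp add: cyc_def)
    then show "t = []" using ctprev d by simp
  next
    fix i L'
    assume A: "i < length t \<and> 0 < L' \<and> cyc t (i + length t - 1) \<noteq> SX \<and>
            (\<forall>k<L'. cyc t (i + k) = SX) \<and> cyc t (i + L') \<noteq> SX"
    then have i: "i < N" and L0: "0 < L'" and h1: "cyc t (i + N - 1) \<noteq> SX"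
      and h2: "\<forall>k<L'. cyc t (i + k) = SX" and h3: "cyc t (i + L') \<noteq> SX"
      using Lt by auto
    have LN: "L' < N"
    proof (rule ccontr)
      assume "\<not> L' < N"
      then have "N - 1 < L'" using N2 by simp
      then have "cyc t (i + (N - 1)) = SX" using h2 by blast
      then show False using h1 N2 by simp
    qed
    show "cyc t (i + length t - 1) \<noteq> cyc t (i + L')"
    proof (cases "\<forall>k<L'. (i + k) mod N \<noteq> j")
      case True
      have e1: "(i + N - 1) mod N \<noteq> j" using h1 ct by auto
      have e2: "(i + L') mod N \<noteq> j" using h3 ct by auto
      have "cyc s (i + length s - 1) \<noteq> cyc s (i + L')"
        using xo unfolding X_blocks_ok_def
        apply (elim conjE)
        apply (erule allE[of _ i], erule allE[of _ L'])
        using i L0 h1 h2 h3 ct True e1 e2 L by auto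
      then show ?thesis using ct e1 e2 L Lt by auto
    next
      case False
      then obtain k0 where k0: "k0 < L'" "(i + k0) mod N = j" by auto
      have "k0 = 0"
      proof (rule ccontr)
        assume "k0 \<noteq> 0"
        define a where "a = i + k0 - 1"
        have a1: "(a + 1) mod N = j" using k0 \<open>k0 \<noteq> 0\<close> by (simp add: a_def)
        have "a mod N \<noteq> j"
        proof
          assume "a mod N = j"
          then have "(a + 1) mod N = (j + 1) mod N" by (metis mod_add_left_eq)
          then show False using a1 ne1 by simp
        qed
        then have "cyc t a = cyc s a" using ct by simp
        also have "\<dots> = cyc s (a + 1 + (N - 1))" using cyc_add_len[of s a] L N2 by simp
        also have "\<dots> = cyc s ((a + 1) mod N + (N - 1))" using cyc_mod_add[of s "a+1" "N - 1"] L by simp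
        also have "\<dots> = d" using a1 prev N2 by simp
        finally have "cyc t a = d" .
        moreover have "cyc t a = SX"
        proof -
          have "k0 - 1 < L'" using k0 by simp
          then have "cyc t (i + (k0 - 1)) = SX" using h2 by blast
          moreover have "i + (k0 - 1) = a" using \<open>k0 \<noteq> 0\<close> by (simp add: a_def)
          ultimately show ?thesis by simp
        qed
        ultimately show False using d by simp
      qed
      then have ij: "i = j" using k0 i by simp
      have e2: "(i + L') mod N \<noteq> j" using h3 ct by auto
      have lhs: "cyc t (i + length t - 1) = d" using ctprev ij Lt by simp
      have rhs: "cyc t (i + L') = cyc s (j + L')" using ct e2 ij by simp
      show ?thesis
      proof (cases "cyc s (j + 1) = SX")
        case True
        have L2: "2 \<le> L'"
        proof (rule ccontr)
          assume "\<not> 2 \<le> L'"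
          then have "L' = 1" using L0 by simp
          then show False using h3 ct ne1 True ij by simp
        qed
        define i' where "i' = (j + 1) mod N"
        have i'N: "i' < N" using N2 by (simp add: i'_def)
        have p1: "cyc s (i' + length s - 1) = d"
        proof -
          have "cyc s (i' + length s - 1) = cyc s (j + 1 + (N - 1))"
            using cyc_mod_add[of s "j+1" "N - 1"] L N2 by (simp add: i'_def)
          also have "\<dots> = cyc s j" using cyc_add_len[of s j] L N2 by simp
          finally show ?thesis using sjc by simp
        qed
        have p2: "\<forall>k<L' - 1. cyc s (i' + k) = SX"
        proof (intro allI impI)
          fix k assume kk: "k < L' - 1"
          have "(j + (1 + k)) mod N \<noteq> j" using mod_ne[of j N "1 + k"] j kk LN by simp
          then have "cyc t (j + (1 + k)) = cyc s (j + (1 + k))" using ct by simp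
          moreover have "cyc t (j + (1 + k)) = SX"
          proof -
            have "1 + k < L'" using kk by simp
            then show ?thesis using h2 ij by blast
          qed
          moreover have "cyc s (i' + k) = cyc s (j + 1 + k)"
            using cyc_mod_add[of s "j+1" k] L by (simp add: i'_def)
          ultimately show "cyc s (i' + k) = SX" by simp
        qed
        have p3: "cyc s (i' + (L' - 1)) = cyc s (j + L')"
          using cyc_mod_add[of s "j+1" "L' - 1"] L L2 by (simp add: i'_def)
        have p4: "cyc s (j + L') \<noteq> SX" using rhs h3 ij by simp
        have "cyc s (i' + length s - 1) \<noteq> cyc s (i' + (L' - 1))"
          using xo unfolding X_blocks_ok_def
          apply (elim conjE)
          apply (erule allE[of _ i'], erule allE[of _ "L' - 1"])
          using i'N L2 p1 p2 p3 p4 d L by auto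
        then show ?thesis using lhs rhs p1 p3 by simp
      next
        case False
        have "L' = 1"
        proof (rule ccontr)
          assume "L' \<noteq> 1"
          then have "1 < L'" using L0 by simp
          then have "cyc t (i + 1) = SX" using h2 by blast
          then show False using ct ne1 False ij by simp
        qed
        then show ?thesis using lhs rhs next1 by simp
      qed
    qed
  qed
  then show ?thesis using c nb[of B0] nb[of B1] Lt unfolding t_def cellular_def by simp
qed

theorem proposition3p2:
  fixes N M :: nat
  assumes "0 < M" and "2 * M < N"
  shows "{s. maximal_in (Str N M) s} = {s \<in> Str N M. dimension s = N - 2 * M}"
proof (intro set_eqI iffI)
  fix s assume "s \<in> {s. maximal_in (Str N M) s}"
  then have c: "cellular N M s" and nm: "\<not> (\<exists>t\<in>Str N M. str_less s t)"
    by (auto simp: maximal_in_def Str_def)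
  have L: "length s = N" using c by (simp add: cellular_def)
  have "dimension s = N - 2 * M"
  proof (rule ccontr)
    assume ne: "dimension s \<noteq> N - 2 * M"
    have "dimension s + 2 * M \<le> N" using dim_le[OF c assms(1)] .
    then have gt2: "2 * M < card {i. i < N \<and> s ! i = B0} + card {i. i < N \<and> s ! i = B1}"
      using dim_sum[OF L] ne by simp
    then obtain d where d: "d \<noteq> SX" "M < card {i. i < N \<and> s ! i = d}"
    proof (cases "M < card {i. i < N \<and> s ! i = B0}")
      case True then show ?thesis using that[of B0] by simp
    next
      case False
      then have "M < card {i. i < N \<and> s ! i = B1}"
        using gt2 by linarith
      then show ?thesis using that[of B1] by simp
    qed
    obtain j where j: "j < N" "s ! j = d" "cyc s (j + N - 1) = d" "cyc s (j + 1) \<noteq> d"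
      using exists_end[OF c assms(1) d(1) d(2)] by blast
    have "cellular N M (s[j := SX])" using replace_ok[OF c assms(1) assms(2) j(1) d(1) j(2-4)] .
    moreover have "str_less s (s[j := SX])"
      unfolding str_less_def
    proof (intro conjI allI impI)
      show "length s = length (s[j := SX])" by simp
      have "s[j := SX] ! j = SX" using j L by simp
      then show "s \<noteq> s[j := SX]" using j d by auto
      fix i assume "i < length (s[j := SX])"
      then show "s ! i = s[j := SX] ! i \<or> (s ! i \<noteq> SX \<and> s[j := SX] ! i = SX)"
        using j d by (cases "i = j") auto
    qed
    ultimately show False using nm by (auto simp: Str_def)
  qed
  then show "s \<in> {s \<in> Str N M. dimension s = N - 2 * M}" using c by (simp add: Str_def)
next
  fix s assume "s \<in> {s \<in> Str N M. dimension s = N - 2 * M}"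
  then have c: "cellular N M s" and ds: "dimension s = N - 2 * M" by (auto simp: Str_def)
  have "\<not> str_less s t" if t: "cellular N M t" for t
  proof
    assume sl: "str_less s t"
    have Ls: "length s = N" using c by (simp add: cellular_def)
    have Lt: "length t = N" using t by (simp add: cellular_def)
    have sub: "{i. i < N \<and> s ! i = SX} \<subseteq> {i. i < N \<and> t ! i = SX}"
      using sl Ls by (auto simp: str_less_def)
    have "s \<noteq> t" using sl by (simp add: str_less_def)
    then obtain k where k: "k < N" "s ! k \<noteq> t ! k" using Ls Lt nth_equalityI by metis
    then have "s ! k \<noteq> SX \<and> t ! k = SX" using sl Ls by (auto simp: str_less_def)
    then have "{i. i < N \<and> s ! i = SX} \<subset> {i. i < N \<and> t ! i = SX}" using sub k by auto
    then have "card {i. i < N \<and> s ! i = SX} < card {i. i < N \<and> t ! i = SX}"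
      by (rule psubset_card_mono[rotated]) simp
    then have "dimension s < dimension t" using Ls Lt by (simp add: dimension_def)
    moreover have "dimension t + 2 * M \<le> N" using dim_le[OF t assms(1)] .
    ultimately show False using ds by simp
  qed
  then show "s \<in> {s. maximal_in (Str N M) s}" using c by (auto simp: maximal_in_def Str_def)
qed

end
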